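(* For $\delta\in(0,\tfrac16)$, let $\mathbb E[Q]$ be the stationary mean number of items in the FCFS matching model on the graph with nodes $\{1,2,3,4\}$ and edges $\{1,3\},\{1,4\},\{2,3\},\{2,4\},\{3,4\}$, and let $\mathbb E[\overline Q]$ be the same quantity for the complete graph on $\{1,2,3,4\}$ (i.e. after adding the edge $\{1,2\}$), both with arrival distribution $\alpha_1=\alpha_2=0.25-\delta$, $\alpha_3=0.5-\delta$, $\alpha_4=3\delta$. Then there exist numbers $0<\delta_1<\delta_2<\tfrac16$ with $\delta_1\approx0.0563$ and $\delta_2\approx 0.134$ such that a Braess paradox occurs, i.e. $\mathbb E[\overline Q]>\mathbb E[Q]$, if and only if $\delta\in(0,\delta_1)\cup(\delta_2,\tfrac16)$.
   Context: A matching model consists of a finite connected simple graph $\mathcal G=(\mathcal V,\xi)$ (the compatibility graph), $\mathcal V=\{1,\dots,n\}$, and a probability distribution $\alpha=(\alpha_1,\dots,\alpha_n)$ on $\mathcal V$ with all $\alpha_i>0$. In each time step an item of class $i$ arrives with probability proportional to $\alpha_i$ (time steps with no arrival do not affect stationary quantities). For $i\in\mathcal V$ let $\mathcal E(i)$ be the set of neighbours of $i$ in $\mathcal G$; for $V\subseteq\mathcal V$ let $\mathcal E(V)=\bigcup_{i\in V}\mathcal E(i)$ and $|\alpha_V|=\sum_{i\in V}\alpha_i$. The state of the system is a finite word $w=w_1\cdots w_q$ over $\mathcal V$ in which no two letters are adjacent in $\mathcal G$ (the classes of the unmatched items in order of arrival). Under the First Come First Served (FCFS) policy, if an item of class $i$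 arrives in state $w$: if some letter of $w$ lies in $\mathcal E(i)$, the first (oldest) such letter is deleted (the two items are matched and leave); otherwise $i$ is appended at the end of $w$. This defines a Markov chain $W$. An independent set is a non-empty subset of $\mathcal V$ no two of whose elements are adjacent; $\mathbb I$ denotes the set of independent sets of $\mathcal G$. The stability condition is $|\alpha_{\mathcal I}|<|\alpha_{\mathcal E(\mathcal I)}|$ for all $\mathcal I\in\mathbb I$; under it $W$ is positive recurrent with unique stationary distribution $\pi(w)=\pi_0\prod_{i=1}^q\alpha_{w_i}/|\alpha_{\mathcal E(\{w_1,\dots,w_i\})}|$. $Q$ is the number of items in the system (length of the word), and $\mathbb E[Q]$ its mean under the stationary distribution. Given two distinct non-adjacent nodes $i^*,j^*$ of $\mathcal G$, $\overline{\mathcal G}$ is $\mathcal G$ with the edge $\{i^*,j^*\}$ added and $\mathbb E[\overline Q]$ is the corresponding stationary mean for $\overline{\mathcal G}$ with the same $\alpha$. A Braess paradox occurs if $\mathbb E[\overline Q]>\mathbb E[Q]$. *)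

theory Defs
  imports "HOL-Analysis.Analysis"
begin

definition nbhd :: "(nat \<Rightarrow> nat \<Rightarrow> bool) \<Rightarrow> nat set \<Rightarrow> nat set \<Rightarrow> nat set" where
  "nbhd E V S = {j \<in> V. \<exists>i\<in>S. E i j}"

definition alpha_sum :: "(nat \<Rightarrow> real) \<Rightarrow> nat set \<Rightarrow> real" where
  "alpha_sum alpha S = (\<Sum>i\<in>S. alpha i)"

definition fcfs_states :: "(nat \<Rightarrow> nat \<Rightarrow> bool) \<Rightarrow> nat set \<Rightarrow> nat list set" where
  "fcfs_states E V = {w. set w \<subseteq> V \<and>
      (\<forall>i<length w. \<forall>j<length w. \<not> E (w ! i) (w ! j))}"

definition fcfs_weight :: "(nat \<Rightarrow> real) \<Rightarrow> (nat \<Rightarrow> nat \<Rightarrow> bool) \<Rightarrow> nat set \<Rightarrow> nat list \<Rightarrow> real" where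
  "fcfs_weight alpha E V w =
     (\<Prod>i<length w. alpha (w ! i) / alpha_sum alpha (nbhd E V (set (take (Suc i) w))))"

definition fcfs_pi :: "(nat \<Rightarrow> real) \<Rightarrow> (nat \<Rightarrow> nat \<Rightarrow> bool) \<Rightarrow> nat set \<Rightarrow> nat list \<Rightarrow> real" where
  "fcfs_pi alpha E V w =
     fcfs_weight alpha E V w / (\<Sum>\<^sub>\<infinity>v\<in>fcfs_states E V. fcfs_weight alpha E V v)"

definition fcfs_mean_Q :: "(nat \<Rightarrow> real) \<Rightarrow> (nat \<Rightarrow> nat \<Rightarrow> bool) \<Rightarrow> nat set \<Rightarrow> real" where
  "fcfs_mean_Q alpha E V = (\<Sum>\<^sub>\<infinity>w\<in>fcfs_states E V. real (length w) * fcfs_pi alpha E V w)"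

definition V4 :: "nat set" where "V4 = {1,2,3,4}"

definition G_edge :: "nat \<Rightarrow> nat \<Rightarrow> bool" where
  "G_edge i j \<longleftrightarrow> {i,j} \<in> {{1,3},{1,4},{2,3},{2,4},{3,4}}"

definition Gbar_edge :: "nat \<Rightarrow> nat \<Rightarrow> bool" where
  "Gbar_edge i j \<longleftrightarrow> {i,j} \<in> {{1,2},{1,3},{1,4},{2,3},{2,4},{3,4}}"

definition alpha_delta :: "real \<Rightarrow> nat \<Rightarrow> real" where
  "alpha_delta \<delta> i = (if i = 1 \<or> i = 2 then 1/4 - \<delta> else if i = 3 then 1/2 - \<delta>
                        else if i = 4 then 3 * \<delta> else 0)"

end

theory Submission
  imports Defs
begin


lemma has_sum_by_length:
  fixes f :: "nat list \<Rightarrow> real" and S :: "nat list set"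
  assumes fin: "\<And>k. finite {w\<in>S. length w = k}"
    and nn: "\<And>w. w \<in> S \<Longrightarrow> f w \<ge> 0"
    and g: "((\<lambda>k. sum f {w\<in>S. length w = k}) has_sum Z) UNIV"
  shows "(f has_sum Z) S"
proof -
  let ?B = "\<lambda>k. {w\<in>S. length w = k}"
  have fB: "\<And>k. k \<in> UNIV \<Longrightarrow> ((\<lambda>y. (f \<circ> snd) (k, y)) has_sum sum f (?B k)) (?B k)"
    using fin by simp
  have sumS: "(f \<circ> snd) summable_on Sigma UNIV ?B"
    by (rule summable_on_SigmaI[OF fB]) (use g nn in \<open>auto intro: has_sum_imp_summable\<close>)
  have "((f \<circ> snd) has_sum Z) (Sigma UNIV ?B)" by (rule has_sum_SigmaI[OF fB g sumS])
  moreover have "inj_on snd (Sigma UNIV ?B)" by (auto simp: inj_on_def)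
  moreover have "snd ` Sigma UNIV ?B = S" by force
  ultimately show ?thesis using has_sum_reindex[of snd "Sigma UNIV ?B" f Z] by simp
qed

lemma geom_has_sum:
  fixes y :: real assumes "0 \<le> y" "y < 1"
  shows "((\<lambda>k. y ^ k) has_sum (1 / (1 - y))) UNIV"
  using assms by (intro sums_nonneg_imp_has_sum geometric_sums) auto

lemma geom_deriv_has_sum:
  fixes y :: real assumes "0 \<le> y" "y < 1"
  shows "((\<lambda>k. real k * y ^ k) has_sum (y / (1 - y)^2)) UNIV"
proof -
  have "(\<lambda>n. of_nat (Suc n) * y ^ n) sums (1 / (1 - y)^2)"
    using assms by (intro geometric_deriv_sums) auto
  then have "(\<lambda>n. y * (of_nat (Suc n) * y ^ n)) sums (y * (1 / (1 - y)^2))"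
    by (rule sums_mult)
  then have "(\<lambda>n. real (Suc n) * y ^ Suc n) sums (y / (1 - y)^2)"
    by (simp add: algebra_simps)
  then have "(\<lambda>n. real n * y ^ n) sums (y / (1 - y)^2 + real 0 * y ^ 0)"
    using sums_Suc_iff[of "\<lambda>n. real n * y ^ n"] by blast
  then show ?thesis using assms by (intro sums_nonneg_imp_has_sum) auto
qed

lemma indicator0_has_sum:
  fixes c :: real
  shows "((\<lambda>k::nat. if k = 0 then c else 0) has_sum c) UNIV"
proof -
  have "((\<lambda>k::nat. if k = 0 then c else 0) has_sum c) {0}"
    using has_sum_finite[of "{0::nat}" "\<lambda>k::nat. if k = 0 then c else 0"] by simp
  moreover have "((\<lambda>k::nat. if k = 0 then c else 0) has_sum c) {0} \<longleftrightarrow> ((\<lambda>k::nat. if k = 0 then c else 0) has_sum c) UNIV"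
    by (rule has_sum_cong_neutral) auto
  ultimately show ?thesis by blast
qed

lemma Gbar_edge_iff: "Gbar_edge x y \<longleftrightarrow> x \<in> V4 \<and> y \<in> V4 \<and> x \<noteq> y"
  by (auto simp: Gbar_edge_def V4_def doubleton_eq_iff)

lemma G_edge_iff: "G_edge x y \<longleftrightarrow> x \<in> V4 \<and> y \<in> V4 \<and> x \<noteq> y \<and> \<not> (x \<in> {1,2} \<and> y \<in> {1,2})"
  by (auto simp: G_edge_def V4_def doubleton_eq_iff)




lemma states_bar: "fcfs_states Gbar_edge V4 = {w. \<exists>i\<in>V4. w = replicate (length w) i}"
proof (intro set_eqI iffI)
  fix w assume w: "w \<in> fcfs_states Gbar_edge V4"
  then have sub: "set w \<subseteq> V4" and ne: "\<And>i j. i < length w \<Longrightarrow> j < length w \<Longrightarrow> \<not> Gbar_edge (w!i) (w!j)"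
    by (auto simp: fcfs_states_def)
  show "w \<in> {w. \<exists>i\<in>V4. w = replicate (length w) i}"
  proof (cases w)
    case Nil then show ?thesis by (auto simp: V4_def)
  next
    case (Cons c cs)
    then have c: "c \<in> V4" using sub by auto
    have "w = replicate (length w) c"
    proof (rule nth_equalityI)
      fix j assume j: "j < length w"
      have "\<not> Gbar_edge (w!0) (w!j)" using ne[of 0 j] j Cons by simp
      moreover have "w!j \<in> V4" using sub j nth_mem by blast
      ultimately have "w ! j = c" using c j Cons by (auto simp: Gbar_edge_iff)
      then show "w ! j = replicate (length w) c ! j" by (subst nth_replicate[OF j])
    qed simp
    then show ?thesis using c by blast
  qed
next
  fix w assume "w \<in> {w. \<exists>i\<in>V4. w = replicate (length w) i}"
  then obtain i n where i: "i \<in> V4" "w = replicate n i" by blast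
  then show "w \<in> fcfs_states Gbar_edge V4"
    unfolding fcfs_states_def by (auto simp: Gbar_edge_iff)
qed

lemma states_G: "fcfs_states G_edge V4 = {w. set w \<subseteq> {1,2}} \<union> {w. \<exists>i\<in>{3,4}. w = replicate (length w) i}"
proof (intro set_eqI iffI)
  fix w :: "nat list" assume w: "w \<in> fcfs_states G_edge V4"
  then have sub: "set w \<subseteq> V4" and ne: "\<And>i j. i < length w \<Longrightarrow> j < length w \<Longrightarrow> \<not> G_edge (w!i) (w!j)"
    by (auto simp: fcfs_states_def)
  show "w \<in> {w. set w \<subseteq> {1,2}} \<union> {w. \<exists>i\<in>{3,4}. w = replicate (length w) i}"
  proof (cases "set w \<subseteq> {1,2}")
    case True then show ?thesis by blast
  next
    case False
    then obtain p where p: "p < length w" "w!p \<notin> {1,2}" by (metis in_set_conv_nth subsetI)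
    have p4: "w!p \<in> V4" using sub p nth_mem by blast
    have "w = replicate (length w) (w!p)"
    proof (rule nth_equalityI)
      fix j assume j: "j < length w"
      have "\<not> G_edge (w!p) (w!j)" using ne j p by auto
      moreover have "w!j \<in> V4" using sub j nth_mem by blast
      ultimately have "w ! j = w ! p" using p p4 j by (auto simp: G_edge_iff)
      then show "w ! j = replicate (length w) (w!p) ! j" by (subst nth_replicate[OF j])
    qed simp
    moreover have "w!p \<in> {3,4}" using p p4 by (auto simp: V4_def)
    ultimately show ?thesis by blast
  qed
next
  fix w :: "nat list" assume "w \<in> {w. set w \<subseteq> {1,2}} \<union> {w. \<exists>i\<in>{3,4}. w = replicate (length w) i}"
  then show "w \<in> fcfs_states G_edge V4"
  proof
    assume "w \<in> {w. set w \<subseteq> {1,2}}"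
    then have s: "set w \<subseteq> {1,2}" by simp
    then have "set w \<subseteq> V4" by (auto simp: V4_def)
    moreover have "\<forall>i<length w. \<forall>j<length w. \<not> G_edge (w ! i) (w ! j)"
    proof (intro allI impI)
      fix p q assume "p < length w" "q < length w"
      then have "w!p \<in> {1,2}" "w!q \<in> {1,2}" using s nth_mem by blast+
      then show "\<not> G_edge (w!p) (w!q)" unfolding G_edge_iff by blast
    qed
    ultimately show ?thesis by (simp add: fcfs_states_def)
  next
    assume "w \<in> {w. \<exists>i\<in>{3,4}. w = replicate (length w) i}"
    then obtain i n where i: "i \<in> {3,4}" "w = replicate n i" by blast
    have "set w \<subseteq> V4" using i by (auto simp: V4_def)
    moreover have "\<forall>p<length w. \<forall>q<length w. \<not> G_edge (w!p) (w!q)"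
    proof (intro allI impI)
      fix p q assume "p < length w" "q < length w"
      then have "w!p = i" "w!q = i" using i(2) by simp_all
      then show "\<not> G_edge (w!p) (w!q)" unfolding G_edge_iff by simp
    qed
    ultimately show ?thesis by (simp add: fcfs_states_def)
  qed
qed

lemma weight_rep:
  assumes "nbhd E V4 {i} = V4 - {i}" "i \<in> V4" "alpha_sum a V4 = 1"
  shows "fcfs_weight a E V4 (replicate k i) = (a i / (1 - a i)) ^ k"
proof -
  have "alpha_sum a (V4 - {i}) = 1 - a i"
    using assms by (simp add: alpha_sum_def sum_diff1 V4_def)
  moreover have "\<And>j. j < k \<Longrightarrow> set (take (Suc j) (replicate k i)) = {i}"
    by (auto simp: min_def)
  ultimately have "\<And>j. j < k \<Longrightarrow> a (replicate k i ! j) / alpha_sum a (nbhd E V4 (set (take (Suc j) (replicate k i)))) = a i / (1 - a i)"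
    using assms(1) by (metis nth_replicate)
  then have "fcfs_weight a E V4 (replicate k i) = (\<Prod>j<k. a i / (1 - a i))"
    unfolding fcfs_weight_def length_replicate by (intro prod.cong refl) (metis lessThan_iff)
  then show ?thesis by simp
qed

lemma nbhd_bar: "i \<in> V4 \<Longrightarrow> nbhd Gbar_edge V4 {i} = V4 - {i}"
  by (auto simp: nbhd_def Gbar_edge_iff)

lemma nbhd_G34: "i \<in> {3,4} \<Longrightarrow> nbhd G_edge V4 {i} = V4 - {i}"
  by (auto simp: nbhd_def G_edge_iff V4_def)

lemma nbhd_G12: assumes "S \<subseteq> {1,2}" "S \<noteq> {}" shows "nbhd G_edge V4 S = {3,4}"
proof -
  obtain x where x: "x \<in> S" using assms by blast
  then have x2: "x \<in> {1,2}" using assms by blast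
  show ?thesis
  proof (rule set_eqI)
    fix j
    show "j \<in> nbhd G_edge V4 S \<longleftrightarrow> j \<in> {3,4}"
    proof
      assume "j \<in> nbhd G_edge V4 S"
      then obtain i where "j \<in> V4" "i \<in> S" "G_edge i j" unfolding nbhd_def by blast
      then show "j \<in> {3,4}" using assms(1) unfolding G_edge_iff V4_def by blast
    next
      assume j: "j \<in> {3,4}"
      have "G_edge x j" using x2 j unfolding G_edge_iff V4_def by auto
      moreover have "j \<in> V4" using j unfolding V4_def by auto
      ultimately show "j \<in> nbhd G_edge V4 S" unfolding nbhd_def using x by blast
    qed
  qed
qed

lemma weight_12:
  assumes "set w \<subseteq> {1,2}" "a 1 = b" "a 2 = b"
  shows "fcfs_weight a G_edge V4 w = (b / (a 3 + a 4)) ^ length w"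
proof -
  have "\<And>j. j < length w \<Longrightarrow> a (w ! j) / alpha_sum a (nbhd G_edge V4 (set (take (Suc j) w))) = b / (a 3 + a 4)"
  proof -
    fix j assume j: "j < length w"
    have s1: "set (take (Suc j) w) \<subseteq> {1,2}" using subset_trans[OF set_take_subset assms(1)] .
    have "w \<noteq> []" using j by auto
    then have "take (Suc j) w \<noteq> []" by (simp only: take_eq_Nil) simp
    then have s2: "set (take (Suc j) w) \<noteq> {}" by (metis set_empty)
    have "nbhd G_edge V4 (set (take (Suc j) w)) = {3,4}" using s1 s2 by (rule nbhd_G12)
    moreover have "a (w ! j) = b"
    proof -
      have "w!j \<in> {1,2}" using assms(1) j nth_mem by blast
      then have "w!j = 1 \<or> w!j = 2" by simp
      then show ?thesis using assms(2,3) by (elim disjE) simp_all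
    qed
    ultimately show "a (w ! j) / alpha_sum a (nbhd G_edge V4 (set (take (Suc j) w))) = b / (a 3 + a 4)"
      by (simp add: alpha_sum_def)
  qed
  then have "fcfs_weight a G_edge V4 w = (\<Prod>j<length w. b / (a 3 + a 4))"
    unfolding fcfs_weight_def by (intro prod.cong refl) (metis lessThan_iff)
  then show ?thesis by simp
qed




lemma mean_from_slices:
  fixes f :: "nat list \<Rightarrow> real" and S :: "nat list set"
  assumes fin: "\<And>k. finite {w\<in>S. length w = k}"
    and nn: "\<And>w. w \<in> S \<Longrightarrow> f w \<ge> 0"
    and hZ: "((\<lambda>k. sum f {w\<in>S. length w = k}) has_sum Z) UNIV"
    and hN: "((\<lambda>k. real k * sum f {w\<in>S. length w = k}) has_sum N) UNIV"
  shows "(\<Sum>\<^sub>\<infinity>w\<in>S. real (length w) * (f w / (\<Sum>\<^sub>\<infinity>v\<in>S. f v))) = N / Z"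
proof -
  have Zs: "(f has_sum Z) S" by (rule has_sum_by_length[OF fin nn hZ])
  then have Zi: "(\<Sum>\<^sub>\<infinity>v\<in>S. f v) = Z" by (rule infsumI)
  have sl: "sum (\<lambda>w. real (length w) * f w) {w\<in>S. length w = k} = real k * sum f {w\<in>S. length w = k}" for k
    by (simp add: sum_distrib_left)
  have "((\<lambda>w. real (length w) * f w) has_sum N) S"
    by (rule has_sum_by_length[OF fin]) (use nn hN sl in auto)
  then have "((\<lambda>w. (1 / Z) * (real (length w) * f w)) has_sum ((1 / Z) * N)) S"
    by (rule has_sum_cmult_right)
  then have "((\<lambda>w. real (length w) * (f w / (\<Sum>\<^sub>\<infinity>v\<in>S. f v))) has_sum (N / Z)) S"
    unfolding Zi by (simp add: field_simps)
  then show ?thesis by (rule infsumI)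
qed

lemma alpha_facts:
  assumes "0 < \<delta>" "\<delta> < 1/6"
  shows "alpha_delta \<delta> 1 = 1/4 - \<delta>" "alpha_delta \<delta> 2 = 1/4 - \<delta>"
    "alpha_delta \<delta> 3 = 1/2 - \<delta>" "alpha_delta \<delta> 4 = 3 * \<delta>"
    "alpha_sum (alpha_delta \<delta>) V4 = 1" "\<And>j. alpha_delta \<delta> j \<ge> 0"
  using assms by (auto simp: alpha_delta_def alpha_sum_def V4_def)

lemma weight_nonneg:
  assumes "\<And>j. a j \<ge> (0::real)"
  shows "fcfs_weight a E V w \<ge> 0"
  unfolding fcfs_weight_def alpha_sum_def using assms
  by (intro prod_nonneg divide_nonneg_nonneg sum_nonneg) auto

lemma bar_slice: "{w \<in> fcfs_states Gbar_edge V4. length w = k} = (\<lambda>i. replicate k i) ` V4"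
  by (auto simp: states_bar)

lemma bar_slice_sum:
  assumes "alpha_sum a V4 = 1"
  shows "sum (fcfs_weight a Gbar_edge V4) {w \<in> fcfs_states Gbar_edge V4. length w = k}
     = (\<Sum>i\<in>V4. (a i / (1 - a i)) ^ k) - (if k = 0 then 3 else 0)"
proof (cases "k = 0")
  case True
  then have "(\<lambda>i. replicate k i) ` V4 = {[]}" by (auto simp: V4_def)
  then have "{w \<in> fcfs_states Gbar_edge V4. length w = k} = {[]}" by (simp only: bar_slice)
  then show ?thesis using True by (simp add: fcfs_weight_def V4_def)
next
  case False
  have "inj_on (\<lambda>i. replicate k i) V4" using False by (auto simp: inj_on_def)
  then have "sum (fcfs_weight a Gbar_edge V4) ((\<lambda>i. replicate k i) ` V4) = (\<Sum>i\<in>V4. fcfs_weight a Gbar_edge V4 (replicate k i))"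
    by (simp add: sum.reindex)
  also have "\<dots> = (\<Sum>i\<in>V4. (a i / (1 - a i)) ^ k)"
    by (intro sum.cong refl weight_rep nbhd_bar assms)
  finally show ?thesis using False by (simp add: bar_slice)
qed

lemma G_slice: "{w \<in> fcfs_states G_edge V4. length w = k} =
   {w. set w \<subseteq> {1,2} \<and> length w = k} \<union> (if k = 0 then {} else {replicate k 3, replicate k 4})"
  by (auto simp: states_G)

lemma G_slice_sum:
  assumes "alpha_sum a V4 = 1" "a 1 = b" "a 2 = b"
  shows "sum (fcfs_weight a G_edge V4) {w \<in> fcfs_states G_edge V4. length w = k}
     = (2 * b / (a 3 + a 4)) ^ k + (a 3 / (1 - a 3)) ^ k + (a 4 / (1 - a 4)) ^ k - (if k = 0 then 2 else 0)"
proof -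
  let ?A = "{w. set w \<subseteq> {1,2::nat} \<and> length w = k}"
  have finA: "finite ?A" by (rule finite_lists_length_eq) simp
  have cardA: "card ?A = 2 ^ k" by (simp add: card_lists_length_eq numeral_2_eq_2)
  have sA: "sum (fcfs_weight a G_edge V4) ?A = (2 * b / (a 3 + a 4)) ^ k"
  proof -
    have "sum (fcfs_weight a G_edge V4) ?A = sum (\<lambda>w. (b / (a 3 + a 4)) ^ k) ?A"
      by (intro sum.cong refl) (auto intro!: weight_12 assms)
    also have "\<dots> = 2 ^ k * (b / (a 3 + a 4)) ^ k" using cardA by simp
    also have "\<dots> = (2 * (b / (a 3 + a 4))) ^ k" by (simp only: power_mult_distrib)
    finally show ?thesis by simp
  qed
  show ?thesis
  proof (cases "k = 0")
    case True
    then have "{w \<in> fcfs_states G_edge V4. length w = k} = ?A" unfolding G_slice by simp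
    then show ?thesis using sA True by simp
  next
    case False
    have d: "?A \<inter> {replicate k 3, replicate k 4} = {}" using False by auto
    have ne: "replicate k 3 \<noteq> replicate k (4::nat)" using False by simp
    have "sum (fcfs_weight a G_edge V4) (?A \<union> {replicate k 3, replicate k 4})
       = sum (fcfs_weight a G_edge V4) ?A + (fcfs_weight a G_edge V4 (replicate k 3) + fcfs_weight a G_edge V4 (replicate k 4))"
      using finA d ne by (simp add: sum.union_disjoint)
    also have "fcfs_weight a G_edge V4 (replicate k 3) = (a 3 / (1 - a 3)) ^ k"
      by (intro weight_rep nbhd_G34 assms) (auto simp: V4_def)
    also have "fcfs_weight a G_edge V4 (replicate k 4) = (a 4 / (1 - a 4)) ^ k"
      by (intro weight_rep nbhd_G34 assms) (auto simp: V4_def)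
    finally have *: "sum (fcfs_weight a G_edge V4) (?A \<union> {replicate k 3, replicate k 4}) = (2 * b / (a 3 + a 4)) ^ k + ((a 3 / (1 - a 3)) ^ k + (a 4 / (1 - a 4)) ^ k)"
      using sA by simp
    have "{w \<in> fcfs_states G_edge V4. length w = k} = ?A \<union> {replicate k 3, replicate k 4}"
      using False by (simp only: G_slice if_False)
    then show ?thesis using * False by simp
  qed
qed




lemma hs_Z4:
  fixes y1 y2 y3 y4 c :: real
  assumes "0 \<le> y1" "y1 < 1" "0 \<le> y2" "y2 < 1" "0 \<le> y3" "y3 < 1" "0 \<le> y4" "y4 < 1"
  shows "((\<lambda>k. y1^k + y2^k + y3^k + y4^k + (if k = 0 then c else 0)) has_sum
          (1/(1-y1) + 1/(1-y2) + 1/(1-y3) + 1/(1-y4) + c)) UNIV"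
  using assms by (intro has_sum_add geom_has_sum indicator0_has_sum)

lemma hs_N4:
  fixes y1 y2 y3 y4 c :: real
  assumes "0 \<le> y1" "y1 < 1" "0 \<le> y2" "y2 < 1" "0 \<le> y3" "y3 < 1" "0 \<le> y4" "y4 < 1"
  shows "((\<lambda>k. real k * (y1^k + y2^k + y3^k + y4^k + (if k = 0 then c else 0))) has_sum
          (y1/(1-y1)^2 + y2/(1-y2)^2 + y3/(1-y3)^2 + y4/(1-y4)^2)) UNIV"
proof -
  have "((\<lambda>k. real k * y1^k + real k * y2^k + real k * y3^k + real k * y4^k) has_sum
          (y1/(1-y1)^2 + y2/(1-y2)^2 + y3/(1-y3)^2 + y4/(1-y4)^2)) UNIV"
    using assms by (intro has_sum_add geom_deriv_has_sum)
  moreover have "\<And>k. real k * (y1^k + y2^k + y3^k + y4^k + (if k = 0 then c else 0)) =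
     real k * y1^k + real k * y2^k + real k * y3^k + real k * y4^k"
    by (simp add: algebra_simps)
  ultimately show ?thesis by simp
qed

lemma hs_Z3:
  fixes y1 y2 y3 c :: real
  assumes "0 \<le> y1" "y1 < 1" "0 \<le> y2" "y2 < 1" "0 \<le> y3" "y3 < 1"
  shows "((\<lambda>k. y1^k + y2^k + y3^k + (if k = 0 then c else 0)) has_sum
          (1/(1-y1) + 1/(1-y2) + 1/(1-y3) + c)) UNIV"
  using assms by (intro has_sum_add geom_has_sum indicator0_has_sum)

lemma hs_N3:
  fixes y1 y2 y3 c :: real
  assumes "0 \<le> y1" "y1 < 1" "0 \<le> y2" "y2 < 1" "0 \<le> y3" "y3 < 1"
  shows "((\<lambda>k. real k * (y1^k + y2^k + y3^k + (if k = 0 then c else 0))) has_sum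
          (y1/(1-y1)^2 + y2/(1-y2)^2 + y3/(1-y3)^2)) UNIV"
proof -
  have "((\<lambda>k. real k * y1^k + real k * y2^k + real k * y3^k) has_sum
          (y1/(1-y1)^2 + y2/(1-y2)^2 + y3/(1-y3)^2)) UNIV"
    using assms by (intro has_sum_add geom_deriv_has_sum)
  moreover have "\<And>k. real k * (y1^k + y2^k + y3^k + (if k = 0 then c else 0)) =
     real k * y1^k + real k * y2^k + real k * y3^k"
    by (simp add: algebra_simps)
  ultimately show ?thesis by simp
qed

lemma mean_bar:
  assumes d: "0 < \<delta>" "\<delta> < 1/6"
  defines "y1 \<equiv> (1/4 - \<delta>) / (3/4 + \<delta>)" and "y3 \<equiv> (1/2 - \<delta>) / (1/2 + \<delta>)" and "y4 \<equiv> 3*\<delta> / (1 - 3*\<delta>)"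
  shows "fcfs_mean_Q (alpha_delta \<delta>) Gbar_edge V4 =
     (y1/(1-y1)^2 + y1/(1-y1)^2 + y3/(1-y3)^2 + y4/(1-y4)^2) /
     (1/(1-y1) + 1/(1-y1) + 1/(1-y3) + 1/(1-y4) + (-3))"
proof -
  let ?a = "alpha_delta \<delta>"
  note af = alpha_facts[OF d]
  have xs: "?a 1 / (1 - ?a 1) = y1" "?a 2 / (1 - ?a 2) = y1" "?a 3 / (1 - ?a 3) = y3" "?a 4 / (1 - ?a 4) = y4"
    unfolding af(1-4) y1_def y3_def y4_def by (auto intro!: arg_cong2[where f="(/)"])
  have yb: "0 \<le> y1" "y1 < 1" "0 \<le> y3" "y3 < 1" "0 \<le> y4" "y4 < 1"
    using d by (simp_all add: y1_def y3_def y4_def divide_simps)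
  have sl: "sum (fcfs_weight ?a Gbar_edge V4) {w \<in> fcfs_states Gbar_edge V4. length w = k} =
       y1^k + y1^k + y3^k + y4^k + (if k = 0 then -3 else 0)" for k
  proof -
    have "(\<Sum>i\<in>V4. (?a i / (1 - ?a i)) ^ k) = (?a 1 / (1 - ?a 1)) ^ k + (?a 2 / (1 - ?a 2)) ^ k + (?a 3 / (1 - ?a 3)) ^ k + (?a 4 / (1 - ?a 4)) ^ k"
      unfolding V4_def by (simp add: add.assoc)
    then show ?thesis using bar_slice_sum[OF af(5), of k] unfolding xs by simp
  qed
  have fin: "finite {w \<in> fcfs_states Gbar_edge V4. length w = k}" for k
    unfolding bar_slice by (simp add: V4_def)
  show ?thesis
    unfolding fcfs_mean_Q_def fcfs_pi_def
    by (rule mean_from_slices[OF fin weight_nonneg]) (use af(6) hs_Z4[OF yb(1,2) yb(1,2) yb(3-6), of "-3"] hs_N4[OF yb(1,2) yb(1,2) yb(3-6)] in \<open>simp_all add: sl\<close>)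
qed

lemma mean_G:
  assumes d: "0 < \<delta>" "\<delta> < 1/6"
  defines "r \<equiv> 2 * (1/4 - \<delta>) / (1/2 - \<delta> + 3 * \<delta>)" and "y3 \<equiv> (1/2 - \<delta>) / (1/2 + \<delta>)" and "y4 \<equiv> 3*\<delta> / (1 - 3*\<delta>)"
  shows "fcfs_mean_Q (alpha_delta \<delta>) G_edge V4 =
     (r/(1-r)^2 + y3/(1-y3)^2 + y4/(1-y4)^2) /
     (1/(1-r) + 1/(1-y3) + 1/(1-y4) + (-2))"
proof -
  let ?a = "alpha_delta \<delta>"
  note af = alpha_facts[OF d]
  have xs: "2 * (1/4 - \<delta>) / (?a 3 + ?a 4) = r" "?a 3 / (1 - ?a 3) = y3" "?a 4 / (1 - ?a 4) = y4"
    unfolding af(1-4) r_def y3_def y4_def by (auto intro!: arg_cong2[where f="(/)"])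
  have yb: "0 \<le> r" "r < 1" "0 \<le> y3" "y3 < 1" "0 \<le> y4" "y4 < 1"
    using d by (simp_all add: r_def y3_def y4_def divide_simps)
  have sl: "sum (fcfs_weight ?a G_edge V4) {w \<in> fcfs_states G_edge V4. length w = k} =
       r^k + y3^k + y4^k + (if k = 0 then -2 else 0)" for k
    using G_slice_sum[OF af(5) af(1) af(2), of k] unfolding xs by simp
  have fin: "finite {w \<in> fcfs_states G_edge V4. length w = k}" for k
  proof -
    have "finite {w. set w \<subseteq> {1,2::nat} \<and> length w = k}" by (rule finite_lists_length_eq) simp
    then show ?thesis by (simp add: G_slice)
  qed
  show ?thesis
    unfolding fcfs_mean_Q_def fcfs_pi_def
    by (rule mean_from_slices[OF fin weight_nonneg]) (use af(6) hs_Z3[OF yb, of "-2"] hs_N3[OF yb] in \<open>simp_all add: sl\<close>)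
qed




lemma cmp_generic:
  fixes d p e zb z nb n Zb Z Nb N :: real
  assumes pos: "d > 0" "p > 0" "e > 0" "Zb > 0" "Z > 0"
    and eqs: "Zb = zb/(4*d*p*e)" "Z = z/(8*d*e)" "Nb = nb/(16*d^2*p^2*e^2)" "N = n/(64*d^2*e^2)"
  shows "N/Z < Nb/Zb \<longleftrightarrow> 0 < 2*nb*z - p*n*zb"
proof -
  have "zb = Zb * (4*d*p*e)" using pos eqs by simp
  then have zb: "zb > 0" using pos by simp
  have "z = Z * (8*d*e)" using pos eqs by simp
  then have z: "z > 0" using pos by simp
  have l: "Nb/Zb = nb/(4*d*p*e*zb)" unfolding eqs using pos zb by (simp add: field_simps power2_eq_square)
  have r: "N/Z = n/(8*d*e*z)" unfolding eqs using pos z by (simp add: field_simps power2_eq_square)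
  have "n/(8*d*e*z) < nb/(4*d*p*e*zb) \<longleftrightarrow> n*(4*d*p*e*zb) < nb*(8*d*e*z)"
    using pos zb z by (simp add: frac_less_eq field_simps)
  also have "\<dots> \<longleftrightarrow> 0 < (4*d*e) * (2*nb*z - p*n*zb)" by (simp add: algebra_simps)
  also have "\<dots> \<longleftrightarrow> 0 < 2*nb*z - p*n*zb"
  proof -
    have k: "4*d*e > 0" using pos by simp
    show ?thesis using k zero_less_mult_pos mult_pos_pos by blast
  qed
  finally show ?thesis using l r by simp
qed

lemma poly_id:
  fixes d :: real
  shows "2 * (1 - 4*d - 24*d^2 - 192*d^3 + 2496*d^4 - 1536*d^5 - 9216*d^6) * (3 - 18*d + 24*d^2)
       - (1 + 4*d) * (5 - 60*d + 148*d^2 + 576*d^3 - 1728*d^4) * (1 + 4*d - 56*d^2 + 96*d^3)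
     = (1 - 6*d) * (1 - 34*d + 376*d^2 - 1744*d^3 + 3712*d^4 - 7168*d^5 + 24576*d^6 - 36864*d^7)"
  by algebra

lemma pieces:
  fixes d p e :: real
  assumes "0 < d" "d < 1/6" and p: "p = 1 + 4*d" and e: "e = 1 - 6*d"
  shows "1/(1 - (1/4 - d) / (3/4 + d)) = (3+4*d)/(2*p)"
    "1/(1 - (1/2 - d) / (1/2 + d)) = (1+2*d)/(4*d)"
    "1/(1 - 3*d / (1 - 3*d)) = (1-3*d)/e"
    "1/(1 - 2 * (1/4 - d) / (1/2 - d + 3 * d)) = p/(8*d)"
    "(1/4 - d) / (3/4 + d) = (1-4*d)/(3+4*d)"
    "(1/2 - d) / (1/2 + d) = (1-2*d)/(1+2*d)"
    "2 * (1/4 - d) / (1/2 - d + 3 * d) = (1-4*d)/p"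
  using assms by (simp_all add: field_simps)

lemma sq_piece: "y / (1 - y)^2 = y * (1 / (1 - y))^2" for y :: real
  by (simp add: power_divide)

lemma gen_sq: "b \<noteq> 0 \<Longrightarrow> a / b * (b / c)^2 = a * b / c^2" for a b c :: real
  by (simp add: power2_eq_square field_simps)

lemma forms:
  fixes d p e :: real
  assumes "0 < d" "d < 1/6" and p: "p = 1 + 4*d" and e: "e = 1 - 6*d"
  shows "(3+4*d)/(2*p) + (3+4*d)/(2*p) + (1+2*d)/(4*d) + (1-3*d)/e + - 3
          = (1 + 4*d - 56*d^2 + 96*d^3) / (4*d*p*e)" (is ?A)
    and "p/(8*d) + (1+2*d)/(4*d) + (1-3*d)/e + - 2 = (3 - 18*d + 24*d^2) / (8*d*e)" (is ?B)
    and "(1-4*d)*(3+4*d)/(2*p)^2 + (1-4*d)*(3+4*d)/(2*p)^2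
         + (1-2*d)*(1+2*d)/(4*d)^2 + 3*d*(1-3*d)/e^2
        = (1 - 4*d - 24*d^2 - 192*d^3 + 2496*d^4 - 1536*d^5 - 9216*d^6) / (16*d^2*p^2*e^2)" (is ?C)
    and "(1-4*d)*p/(8*d)^2 + (1-2*d)*(1+2*d)/(4*d)^2 + 3*d*(1-3*d)/e^2
        = (5 - 60*d + 148*d^2 + 576*d^3 - 1728*d^4) / (64*d^2*e^2)" (is ?D)
proof -
  have nz: "p \<noteq> 0" "e \<noteq> 0" "d \<noteq> 0"
    using assms by auto
  show ?A using nz apply (simp add: field_simps) unfolding p e by algebra
  show ?B using nz apply (simp add: field_simps) unfolding p e by algebra
  show ?C using nz apply (simp add: field_simps) unfolding p e by algebra
  show ?D using nz apply (simp add: field_simps) unfolding p e by algebra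
qed




fun peval :: "real list \<Rightarrow> real \<Rightarrow> real" where
  "peval [] x = 0"
| "peval (c # cs) x = c + x * peval cs x"

fun padd :: "real list \<Rightarrow> real list \<Rightarrow> real list" where
  "padd [] ys = ys"
| "padd xs [] = xs"
| "padd (x # xs) (y # ys) = (x + y) # padd xs ys"

lemma peval_padd: "peval (padd xs ys) t = peval xs t + peval ys t"
  by (induction xs ys rule: padd.induct) (auto simp: algebra_simps)

lemma peval_smul: "peval (map ((*) a) xs) t = a * peval xs t"
  by (induction xs) (auto simp: algebra_simps)

fun pshift :: "real \<Rightarrow> real list \<Rightarrow> real list" where
  "pshift a [] = []"
| "pshift a (c # cs) = padd [c] (padd (map ((*) a) (pshift a cs)) (0 # pshift a cs))"

lemma peval_pshift: "peval (pshift a cs) t = peval cs (a + t)"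
  by (induction cs) (auto simp: peval_padd peval_smul algebra_simps)

fun hb :: "real \<Rightarrow> real list \<Rightarrow> real \<times> real" where
  "hb h [] = (0, 0)"
| "hb h (c # cs) = (case hb h cs of (L, U) \<Rightarrow> (c + min 0 (h * L), c + max 0 (h * U)))"

lemma hb_correct:
  assumes "0 \<le> t" "t \<le> h"
  shows "fst (hb h cs) \<le> peval cs t \<and> peval cs t \<le> snd (hb h cs)"
proof (induction cs)
  case Nil then show ?case by simp
next
  case (Cons c cs)
  obtain L U where LU: "hb h cs = (L, U)" by (cases "hb h cs")
  with Cons have a: "L \<le> peval cs t" "peval cs t \<le> U" by auto
  have "min 0 (h * L) \<le> t * peval cs t"
  proof (cases "L \<ge> 0")
    case True then show ?thesis using a assms by (simp add: min_def)
  next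
    case False
    have "h * L \<le> t * L" using False assms by (simp add: mult_right_mono_neg)
    also have "\<dots> \<le> t * peval cs t" using a assms by (simp add: mult_left_mono)
    finally show ?thesis by (simp add: min_def)
  qed
  moreover have "t * peval cs t \<le> max 0 (h * U)"
  proof (cases "U \<le> 0")
    case True
    have "peval cs t \<le> 0" using a True by linarith
    then have "t * peval cs t \<le> 0" using assms by (simp add: mult_nonneg_nonpos)
    then show ?thesis by simp
  next
    case False
    have "t * peval cs t \<le> t * U" using a assms by (simp add: mult_left_mono)
    also have "\<dots> \<le> h * U" using False assms by (simp add: mult_right_mono)
    finally show ?thesis by (simp add: max_def)
  qed
  ultimately show ?case by (simp add: LU)
qed

definition pos_on :: "real list \<Rightarrow> real \<Rightarrow> real \<Rightarrow> bool" where
  "pos_on cs l u \<longleftrightarrow> l \<le> u \<and> fst (hb (u - l) (pshift l cs)) > 0"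

definition neg_on :: "real list \<Rightarrow> real \<Rightarrow> real \<Rightarrow> bool" where
  "neg_on cs l u \<longleftrightarrow> l \<le> u \<and> snd (hb (u - l) (pshift l cs)) < 0"

lemma pos_onD: "pos_on cs l u \<Longrightarrow> l \<le> x \<Longrightarrow> x \<le> u \<Longrightarrow> peval cs x > 0"
  using hb_correct[of "x - l" "u - l" "pshift l cs"] unfolding pos_on_def
  by (auto simp: peval_pshift)

lemma neg_onD: "neg_on cs l u \<Longrightarrow> l \<le> x \<Longrightarrow> x \<le> u \<Longrightarrow> peval cs x < 0"
  using hb_correct[of "x - l" "u - l" "pshift l cs"] unfolding neg_on_def
  by (auto simp: peval_pshift)

fun pder :: "real list \<Rightarrow> real list" where
  "pder [] = []"
| "pder (c # cs) = padd cs (0 # pder cs)"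

lemma peval_deriv: "(peval cs has_real_derivative peval (pder cs) x) (at x)"
proof (induction cs)
  case Nil then show ?case by simp
next
  case (Cons c cs)
  have "((\<lambda>x. x * peval cs x) has_real_derivative (1 * peval cs x + peval (pder cs) x * x)) (at x)"
    by (rule DERIV_mult[OF DERIV_ident Cons])
  then have "((\<lambda>x. c + x * peval cs x) has_real_derivative (0 + (1 * peval cs x + peval (pder cs) x * x))) (at x)"
    by (intro DERIV_add DERIV_const)
  then show ?case by (simp add: peval_padd mult.commute)
qed

definition Qc :: "real list" where "Qc = [1, -34, 376, -1744, 3712, -7168, 24576, -36864]"




definition allpos :: "real list \<Rightarrow> real \<Rightarrow> real \<Rightarrow> bool" where
  "allpos cs a b \<longleftrightarrow> (\<forall>x. a \<le> x \<longrightarrow> x \<le> b \<longrightarrow> peval cs x > 0)"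

definition allneg :: "real list \<Rightarrow> real \<Rightarrow> real \<Rightarrow> bool" where
  "allneg cs a b \<longleftrightarrow> (\<forall>x. a \<le> x \<longrightarrow> x \<le> b \<longrightarrow> peval cs x < 0)"

lemma allpos_I: "pos_on cs a b \<Longrightarrow> allpos cs a b"
  unfolding allpos_def using pos_onD by blast

lemma allneg_I: "neg_on cs a b \<Longrightarrow> allneg cs a b"
  unfolding allneg_def using neg_onD by blast

lemma allpos_join: "allpos cs a b \<Longrightarrow> pos_on cs b c \<Longrightarrow> allpos cs a c"
  unfolding allpos_def using pos_onD by (meson linear)

lemma allneg_join: "allneg cs a b \<Longrightarrow> neg_on cs b c \<Longrightarrow> allneg cs a c"
  unfolding allneg_def using neg_onD by (meson linear)

lemma Qc_eval: "peval Qc d = 1 - 34*d + 376*d^2 - 1744*d^3 + 3712*d^4 - 7168*d^5 + 24576*d^6 - 36864*d^7"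
  unfolding Qc_def by simp algebra

lemma zb_pos: "0 \<le> d \<Longrightarrow> d \<le> 1/6 \<Longrightarrow> 0 < 1 + 4*d - 56*d^2 + 96*d^3" for d :: real
proof -
  assume "0 \<le> d" "d \<le> 1/6"
  then have "peval [1,4,-56,96] d > 0"
    by (intro pos_onD[of _ 0 "1/6"]) (simp_all add: pos_on_def)
  moreover have "peval [1,4,-56,96] d = 1 + 4*d - 56*d^2 + 96*d^3" by simp algebra
  ultimately show ?thesis by simp
qed

lemma z_pos: "0 \<le> d \<Longrightarrow> d \<le> 1/6 \<Longrightarrow> 0 < 3 - 18*d + 24*d^2" for d :: real
proof -
  assume a: "0 \<le> d" "d \<le> 1/6"
  have "allpos [3,-18,24] 0 (1/6)"
    by (rule allpos_join[where b="1/12", OF allpos_I]) (simp_all add: pos_on_def)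
  then have "peval [3,-18,24] d > 0" using a unfolding allpos_def by blast
  moreover have "peval [3,-18,24] d = 3 - 18*d + 24*d^2" by simp algebra
  ultimately show ?thesis by simp
qed

lemma braess_iff_Q:
  assumes d: "0 < \<delta>" "\<delta> < 1/6"
  shows "fcfs_mean_Q (alpha_delta \<delta>) G_edge V4 < fcfs_mean_Q (alpha_delta \<delta>) Gbar_edge V4 \<longleftrightarrow> 0 < peval Qc \<delta>"
proof -
  define p where "p = 1 + 4*\<delta>"
  define e where "e = 1 - 6*\<delta>"
  have p0: "p > 0" and e0: "e > 0" using d by (auto simp: p_def e_def)
  note pc = pieces[OF d p_def e_def]
  note fm = forms[OF d p_def e_def]
  have nz: "3 + 4*\<delta> \<noteq> 0" "1 + 2*\<delta> \<noteq> 0" "1 - 3*\<delta> \<noteq> 0" "p \<noteq> 0" using d p0 by auto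
  have mb: "fcfs_mean_Q (alpha_delta \<delta>) Gbar_edge V4 =
     ((1 - 4*\<delta> - 24*\<delta>^2 - 192*\<delta>^3 + 2496*\<delta>^4 - 1536*\<delta>^5 - 9216*\<delta>^6) / (16*\<delta>^2*p^2*e^2))
     / ((1 + 4*\<delta> - 56*\<delta>^2 + 96*\<delta>^3) / (4*\<delta>*p*e))"
    unfolding mean_bar[OF d] sq_piece unfolding pc(1-4) unfolding pc(5-7)
    unfolding gen_sq[OF nz(1)] gen_sq[OF nz(2)] gen_sq[OF nz(3)] gen_sq[OF nz(4)]
    unfolding fm ..
  have mg: "fcfs_mean_Q (alpha_delta \<delta>) G_edge V4 =
     ((5 - 60*\<delta> + 148*\<delta>^2 + 576*\<delta>^3 - 1728*\<delta>^4) / (64*\<delta>^2*e^2))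
     / ((3 - 18*\<delta> + 24*\<delta>^2) / (8*\<delta>*e))"
    unfolding mean_G[OF d] sq_piece unfolding pc(1-4) unfolding pc(5-7)
    unfolding gen_sq[OF nz(1)] gen_sq[OF nz(2)] gen_sq[OF nz(3)] gen_sq[OF nz(4)]
    unfolding fm ..
  have zbp: "(1 + 4*\<delta> - 56*\<delta>^2 + 96*\<delta>^3) / (4*\<delta>*p*e) > 0"
    using zb_pos[of \<delta>] d p0 e0 by simp
  have zp: "(3 - 18*\<delta> + 24*\<delta>^2) / (8*\<delta>*e) > 0"
    using z_pos[of \<delta>] d e0 by simp
  have "fcfs_mean_Q (alpha_delta \<delta>) G_edge V4 < fcfs_mean_Q (alpha_delta \<delta>) Gbar_edge V4 \<longleftrightarrow>
     0 < 2 * (1 - 4*\<delta> - 24*\<delta>^2 - 192*\<delta>^3 + 2496*\<delta>^4 - 1536*\<delta>^5 - 9216*\<delta>^6) * (3 - 18*\<delta> + 24*\<delta>^2)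
       - p * (5 - 60*\<delta> + 148*\<delta>^2 + 576*\<delta>^3 - 1728*\<delta>^4) * (1 + 4*\<delta> - 56*\<delta>^2 + 96*\<delta>^3)"
    unfolding mb mg by (rule cmp_generic[OF d(1) p0 e0 zbp zp refl refl refl refl])
  also have "\<dots> \<longleftrightarrow> 0 < e * peval Qc \<delta>"
    unfolding Qc_eval p_def e_def poly_id ..
  also have "\<dots> \<longleftrightarrow> 0 < peval Qc \<delta>" using e0 by (simp add: zero_less_mult_iff)
  finally show ?thesis .
qed

lemma peval_cont: "continuous_on A (peval cs)"
  by (meson DERIV_isCont continuous_at_imp_continuous_on peval_deriv)

lemma dec_on:
  assumes "allneg (pder cs) a b" "a \<le> x" "x < y" "y \<le> b"
  shows "peval cs y < peval cs x"
proof (rule DERIV_neg_imp_decreasing[OF assms(3)])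
  fix t assume "x \<le> t" "t \<le> y"
  then have "a \<le> t" "t \<le> b" using assms by linarith+
  then show "\<exists>z. DERIV (peval cs) t :> z \<and> z < 0"
    using assms(1) peval_deriv unfolding allneg_def by blast
qed

lemma inc_on:
  assumes "allpos (pder cs) a b" "a \<le> x" "x < y" "y \<le> b"
  shows "peval cs x < peval cs y"
proof (rule DERIV_pos_imp_increasing[OF assms(3)])
  fix t assume "x \<le> t" "t \<le> y"
  then have "a \<le> t" "t \<le> b" using assms by linarith+
  then show "\<exists>z. DERIV (peval cs) t :> z \<and> z > 0"
    using assms(1) peval_deriv unfolding allpos_def by blast
qed

lemma Q_sign:
  "\<exists>\<delta>\<^sub>1 \<delta>\<^sub>2 :: real. 563/10000 < \<delta>\<^sub>1 \<and> \<delta>\<^sub>1 < 564/10000 \<and> 267/2000 < \<delta>\<^sub>2 \<and> \<delta>\<^sub>2 < 269/2000 \<and>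
     (\<forall>\<delta>. 0 < \<delta> \<and> \<delta> < 1/6 \<longrightarrow> (0 < peval Qc \<delta> \<longleftrightarrow> \<delta> < \<delta>\<^sub>1 \<or> \<delta>\<^sub>2 < \<delta>))"
proof -
  have P1: "allpos Qc 0 (563/10000)"
    apply (rule allpos_join[where b="35469/640000"])
    apply (rule allpos_join[where b="17453/320000"])
    apply (rule allpos_join[where b="1689/32000"])
    apply (rule allpos_join[where b="3941/80000"])
    apply (rule allpos_join[where b="1689/40000"])
    apply (rule allpos_join[where b="563/20000"])
    apply (rule allpos_I)
    by (simp_all add: pos_on_def Qc_def)
  have D1: "allneg (pder Qc) (563/10000) (564/10000)"
    by (rule allneg_I) (simp add: neg_on_def Qc_def)
  have N1: "allneg Qc (564/10000) (267/2000)"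
    apply (rule allneg_join[where b="9909/80000"])
    apply (rule allneg_join[where b="4569/40000"])
    apply (rule allneg_join[where b="1899/20000"])
    apply (rule allneg_I)
    by (simp_all add: neg_on_def Qc_def)
  have D2: "allpos (pder Qc) (267/2000) (269/2000)"
    by (rule allpos_I) (simp add: pos_on_def Qc_def)
  have P2: "allpos Qc (269/2000) (1/6)"
    by (rule allpos_I) (simp add: pos_on_def Qc_def)
  have a1: "peval Qc (563/10000) > 0" using P1 unfolding allpos_def by simp
  have b1: "peval Qc (564/10000) < 0" using N1 unfolding allneg_def by simp
  have a2: "peval Qc (267/2000) < 0" using N1 unfolding allneg_def by simp
  have b2: "peval Qc (269/2000) > 0" using P2 unfolding allpos_def by simp
  obtain d1 where d1: "563/10000 \<le> d1" "d1 \<le> 564/10000" "peval Qc d1 = 0"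
    using IVT2'[of "peval Qc" "564/10000" 0 "563/10000", OF _ _ _ peval_cont] a1 b1 by auto
  obtain d2 where d2: "267/2000 \<le> d2" "d2 \<le> 269/2000" "peval Qc d2 = 0"
    using IVT'[of "peval Qc" "267/2000" 0 "269/2000", OF _ _ _ peval_cont] a2 b2 by auto
  have "d1 \<noteq> 563/10000" using d1(3) a1 by force
  moreover have "d1 \<noteq> 564/10000" using d1(3) b1 by force
  ultimately have d1s: "563/10000 < d1" "d1 < 564/10000" using d1(1,2) by linarith+
  have "d2 \<noteq> 267/2000" using d2(3) a2 by force
  moreover have "d2 \<noteq> 269/2000" using d2(3) b2 by force
  ultimately have d2s: "267/2000 < d2" "d2 < 269/2000" using d2(1,2) by linarith+
  have main: "0 < peval Qc \<delta> \<longleftrightarrow> \<delta> < d1 \<or> d2 < \<delta>" if "0 < \<delta>" "\<delta> < 1/6" for \<delta>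
  proof -
    consider "\<delta> \<le> 563/10000" | "563/10000 \<le> \<delta>" "\<delta> \<le> 564/10000" | "564/10000 \<le> \<delta>" "\<delta> \<le> 267/2000"
      | "267/2000 \<le> \<delta>" "\<delta> \<le> 269/2000" | "269/2000 \<le> \<delta>" by linarith
    then show ?thesis
    proof cases
      case 1
      then have "peval Qc \<delta> > 0" using P1 that unfolding allpos_def by simp
      then show ?thesis using 1 d1s by simp
    next
      case 2
      consider "\<delta> < d1" | "\<delta> = d1" | "d1 < \<delta>" by linarith
      then show ?thesis
      proof cases
        case 1
        then have "peval Qc d1 < peval Qc \<delta>" by (rule dec_on[OF D1, rotated]) (use 2 d1 in linarith)+
        then show ?thesis using 1 d1 by simp
      next
        case 2
        then show ?thesis using d1 d2s d1s by simp
      next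
        case 3
        then have "peval Qc \<delta> < peval Qc d1" by (rule dec_on[OF D1, rotated]) (use 2 d1 in linarith)+
        then show ?thesis using 3 2 d1 d2s by simp
      qed
    next
      case 3
      then have "peval Qc \<delta> < 0" using N1 unfolding allneg_def by simp
      then show ?thesis using 3 d1s d2s by simp
    next
      case 4
      consider "\<delta> < d2" | "\<delta> = d2" | "d2 < \<delta>" by linarith
      then show ?thesis
      proof cases
        case 1
        then have "peval Qc \<delta> < peval Qc d2" by (rule inc_on[OF D2, rotated]) (use 4 d2 in linarith)+
        then show ?thesis using 1 4 d2 d1s by simp
      next
        case 2
        then show ?thesis using d2 d2s d1s by simp
      next
        case 3
        then have "peval Qc d2 < peval Qc \<delta>" by (rule inc_on[OF D2, rotated]) (use 4 d2 in linarith)+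
        then show ?thesis using 3 d2 by simp
      qed
    next
      case 5
      then have "peval Qc \<delta> > 0" using P2 that unfolding allpos_def by simp
      then show ?thesis using 5 d2s by simp
    qed
  qed
  show ?thesis using d1s d2s main by blast
qed

theorem mainTheorem3:
  shows "\<exists>\<delta>\<^sub>1 \<delta>\<^sub>2 :: real. 0 < \<delta>\<^sub>1 \<and> \<delta>\<^sub>1 < \<delta>\<^sub>2 \<and> \<delta>\<^sub>2 < 1/6 \<and>
     \<bar>\<delta>\<^sub>1 - 0.0563\<bar> < 0.0001 \<and> \<bar>\<delta>\<^sub>2 - 0.134\<bar> < 0.001 \<and>
     (\<forall>\<delta>::real. 0 < \<delta> \<and> \<delta> < 1/6 \<longrightarrow>
        (fcfs_mean_Q (alpha_delta \<delta>) Gbar_edge V4 > fcfs_mean_Q (alpha_delta \<delta>) G_edge V4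
         \<longleftrightarrow> (\<delta> < \<delta>\<^sub>1 \<or> \<delta>\<^sub>2 < \<delta>)))"
proof -
  obtain d1 d2 :: real where b: "563/10000 < d1" "d1 < 564/10000" "267/2000 < d2" "d2 < 269/2000"
    and m: "\<forall>\<delta>. 0 < \<delta> \<and> \<delta> < 1/6 \<longrightarrow> (0 < peval Qc \<delta> \<longleftrightarrow> \<delta> < d1 \<or> d2 < \<delta>)"
    using Q_sign by blast
  show ?thesis
  proof (intro exI conjI allI impI)
    show "0 < d1" "d1 < d2" "d2 < 1/6" using b by simp_all
    have n: "(0.0563::real) = 563/10000" "(0.0001::real) = 1/10000" "(0.134::real) = 134/1000" "(0.001::real) = 1/1000"
      by simp_all
    show "\<bar>d1 - 0.0563\<bar> < 0.0001" unfolding abs_less_iff n using b by linarith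
    show "\<bar>d2 - 0.134\<bar> < 0.001" unfolding abs_less_iff n using b by linarith
  next
    fix \<delta> :: real assume "0 < \<delta> \<and> \<delta> < 1/6"
    then show "fcfs_mean_Q (alpha_delta \<delta>) Gbar_edge V4 > fcfs_mean_Q (alpha_delta \<delta>) G_edge V4
         \<longleftrightarrow> (\<delta> < d1 \<or> d2 < \<delta>)"
      using braess_iff_Q[of \<delta>] m by simp
  qed
qed

end
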